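(* For a positive integer $m$, let $n=m$, $\mathbf A=\mathbf 0\in\mathbb R^{m\times m}$, $\mathbf c=\mathbf 0$, $\mathbf d=\mathbf e$, and $$\mathcal U=\operatorname{conv}\left(\mathbf 0,\mathbf e_1,\dots,\mathbf e_m,\boldsymbol\nu_1,\dots,\boldsymbol\nu_m\right),\qquad \boldsymbol\nu_i=\tfrac{1}{\sqrt m}(\mathbf e-\mathbf e_i),\ i\in[m].$$ Let $\tilde{\mathbf B}\in\mathbb R_+^{m\times m}$ be the random matrix with $\tilde B_{ii}=1$ and $\tilde B_{ij}=\frac{1}{\sqrt m}\tilde u_{ij}$ for $i\neq j$, where the $\tilde u_{ij}$ ($i\ne j$) are i.i.d. uniform on $[0,1]$. Then with probability at least $1-\frac1m$, $$z_{\sf Aff}(\tilde{\mathbf B})=\Omega(\sqrt m)\cdot z_{\sf AR}(\tilde{\mathbf B}),$$ i.e. there are absolute constants $C>0$ and $m_0$ such that for all $m\ge m_0$, with probability at least $1-\frac1m$, $z_{\sf Aff}(\tilde{\mathbf B})\ge C\sqrt m\, z_{\sf AR}(\tilde{\mathbf B})$.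
   Context: For data $\mathbf A,\mathbf B\in\mathbb R_+^{m\times n}$, $\mathbf c,\mathbf d\in\mathbb R_+^n$ and a compact convex set $\mathcal U\subseteq\mathbb R^m_+$, the two-stage adjustable robust problem is $$z_{\sf AR}(\mathbf B)=\min_{\mathbf x\in\mathbb R^n_+}\ \mathbf c^T\mathbf x+\max_{\mathbf h\in\mathcal U}\ \min_{\mathbf y(\mathbf h)\in\mathbb R^n_+:\ \mathbf A\mathbf x+\mathbf B\mathbf y(\mathbf h)\ge \mathbf h}\ \mathbf d^T\mathbf y(\mathbf h).$$ The affine policy problem $z_{\sf Aff}(\mathbf B)$ is the same problem with the second-stage decision restricted to $\mathbf y(\mathbf h)=\mathbf P\mathbf h+\mathbf q$ for some $\mathbf P\in\mathbb R^{n\times m}$, $\mathbf q\in\mathbb R^n$: it is the minimum over $\mathbf x\in\mathbb R^n_+,\mathbf P,\mathbf q$ of $\mathbf c^T\mathbf x+\max_{\mathbf h\in\mathcal U}\mathbf d^T(\mathbf P\mathbf h+\mathbf q)$ subject to $\mathbf A\mathbf x+\mathbf B(\mathbf P\mathbf h+\mathbf q)\ge\mathbf h$ and $\mathbf P\mathbf h+\mathbf q\ge\mathbf 0$ for all $\mathbf h\in\mathcal U$. $\mathbf e$ is the all-ones vector and $\mathbf e_i$ the $i$-th standard basis vector of $\mathbb R^m$. *)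

theory Defs
  imports "HOL-Probability.Probability"
begin

text \<open>Vectors in R^k are represented as nat => real (only indices < k matter);
  matrices in R^(r x s) as nat => nat => real (only indices < r, < s matter).\<close>

text \<open>Two-stage adjustable robust problem z_AR (with ereal conventions:
  Inf of empty = +infinity, Sup of empty = -infinity).\<close>
definition z_AR ::
  "nat \<Rightarrow> nat \<Rightarrow> (nat \<Rightarrow> nat \<Rightarrow> real) \<Rightarrow> (nat \<Rightarrow> nat \<Rightarrow> real)
   \<Rightarrow> (nat \<Rightarrow> real) \<Rightarrow> (nat \<Rightarrow> real) \<Rightarrow> (nat \<Rightarrow> real) set \<Rightarrow> ereal" where
  "z_AR m n A B c d U =
    (INF x \<in> {x. \<forall>j<n. 0 \<le> x j}.
       ereal (\<Sum>j<n. c j * x j) +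
       (SUP h \<in> U.
          INF y \<in> {y. (\<forall>j<n. 0 \<le> y j) \<and>
                     (\<forall>i<m. (\<Sum>j<n. A i j * x j) + (\<Sum>j<n. B i j * y j) \<ge> h i)}.
             ereal (\<Sum>j<n. d j * y j)))"

definition aff_pol :: "nat \<Rightarrow> (nat \<Rightarrow> nat \<Rightarrow> real) \<Rightarrow> (nat \<Rightarrow> real) \<Rightarrow> (nat \<Rightarrow> real) \<Rightarrow> (nat \<Rightarrow> real)"
  where "aff_pol m P q h = (\<lambda>j. (\<Sum>i<m. P j i * h i) + q j)"

definition z_Aff ::
  "nat \<Rightarrow> nat \<Rightarrow> (nat \<Rightarrow> nat \<Rightarrow> real) \<Rightarrow> (nat \<Rightarrow> nat \<Rightarrow> real)
   \<Rightarrow> (nat \<Rightarrow> real) \<Rightarrow> (nat \<Rightarrow> real) \<Rightarrow> (nat \<Rightarrow> real) set \<Rightarrow> ereal" where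
  "z_Aff m n A B c d U =
    (INF (x, P, q) \<in> {(x, P, q). (\<forall>j<n. 0 \<le> x j) \<and>
        (\<forall>h\<in>U. (\<forall>i<m. (\<Sum>j<n. A i j * x j) + (\<Sum>j<n. B i j * aff_pol m P q h j) \<ge> h i)
               \<and> (\<forall>j<n. 0 \<le> aff_pol m P q h j))}.
       ereal (\<Sum>j<n. c j * x j) + (SUP h \<in> U. ereal (\<Sum>j<n. d j * aff_pol m P q h j)))"

definition conv_pts :: "nat \<Rightarrow> nat \<Rightarrow> (nat \<Rightarrow> nat \<Rightarrow> real) \<Rightarrow> (nat \<Rightarrow> real) set" where
  "conv_pts m N g = {h. \<exists>w. (\<forall>k\<le>N. 0 \<le> w k) \<and> (\<Sum>k\<le>N. w k) = 1 \<and>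
      (\<forall>i<m. h i = (\<Sum>k\<le>N. w k * g k i)) \<and> (\<forall>i\<ge>m. h i = 0)}"

definition unit_vec :: "nat \<Rightarrow> nat \<Rightarrow> real" where
  "unit_vec i = (\<lambda>l. if l = i then 1 else 0)"

text \<open>Generators 0, e_1..e_m, nu_1..nu_m (0-based: index 0 is the origin,
  index k+1 is e_k, index m+k+1 is nu_k, for k < m).\<close>
definition gens3 :: "nat \<Rightarrow> nat \<Rightarrow> nat \<Rightarrow> real" where
  "gens3 m k = (if k = 0 then (\<lambda>_. 0)
                else if k \<le> m then unit_vec (k - 1)
                else (\<lambda>l. (1 - unit_vec (k - m - 1) l) / sqrt (real m)))"

definition U3 :: "nat \<Rightarrow> (nat \<Rightarrow> real) set" where
  "U3 m = conv_pts m (2 * m) (gens3 m)"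

definition offdiag :: "nat \<Rightarrow> (nat \<times> nat) set" where
  "offdiag m = {(i, j). i < m \<and> j < m \<and> i \<noteq> j}"

definition U_space :: "nat \<Rightarrow> (nat \<times> nat \<Rightarrow> real) measure" where
  "U_space m = PiM (offdiag m) (\<lambda>_. uniform_measure lborel {0..1::real})"

definition B_tilde :: "nat \<Rightarrow> (nat \<times> nat \<Rightarrow> real) \<Rightarrow> nat \<Rightarrow> nat \<Rightarrow> real" where
  "B_tilde m u = (\<lambda>i j. if i = j then 1 else u (i, j) / sqrt (real m))"

end

theory Submission
  imports Defs
begin


lemma sum_split_add: "(\<Sum>k<a+b. g k) = (\<Sum>k<a. g k) + (\<Sum>k<b. g (a+k))" for g :: "nat \<Rightarrow> real"
  by (induction b) (auto simp: add.assoc)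

lemma sum_split3: "(\<Sum>k\<le>2*m. f k) = f 0 + (\<Sum>l<m. f (l+1)) + (\<Sum>l<m. f (m+l+1::nat))" for f :: "nat \<Rightarrow> real"
proof -
  have "{..2*m} = {..<1+(m+m)}" by auto
  then have "(\<Sum>k\<le>2*m. f k) = (\<Sum>k<1+(m+m). f k)" by simp
  also have "\<dots> = f 0 + (\<Sum>k<m+m. f (1+k))" using sum_split_add[of f 1 "m+m"] by simp
  also have "\<dots> = f 0 + (\<Sum>k<m. f (1+k)) + (\<Sum>k<m. f (1+(m+k)))" 
    using sum_split_add[of "\<lambda>k. f (1+k)" m m] by simp
  finally show ?thesis by (simp add: add.commute add.left_commute)
qed

lemma gen_in_U3:
  assumes "k \<le> 2*m"
  shows "(\<lambda>i. if i < m then gens3 m k i else 0) \<in> U3 m"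
proof -
  define w :: "nat \<Rightarrow> real" where "w = (\<lambda>k'. if k' = k then 1 else 0)"
  have "\<forall>i<m. (if i < m then gens3 m k i else 0) = (\<Sum>k'\<le>2*m. w k' * gens3 m k' i)"
  proof (intro allI impI)
    fix i assume "i < m"
    have "(\<Sum>k'\<le>2*m. w k' * gens3 m k' i) = (\<Sum>k'\<le>2*m. if k' = k then gens3 m k' i else 0)"
      by (rule sum.cong) (auto simp: w_def)
    also have "\<dots> = gens3 m k i" using assms by (simp add: sum.delta')
    finally show "(if i < m then gens3 m k i else 0) = (\<Sum>k'\<le>2*m. w k' * gens3 m k' i)" using \<open>i<m\<close> by simp
  qed
  moreover have "(\<Sum>k'\<le>2*m. w k') = 1" using assms by (simp add: w_def)
  moreover have "\<forall>k'\<le>2*m. 0 \<le> w k'" by (simp add: w_def)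
  ultimately show ?thesis unfolding U3_def conv_pts_def by (intro CollectI exI[of _ w]) auto
qed
lemma final_arith:
  fixes m w z T D Q :: real
  assumes w: "w > 0" "w * w = m" and m: "m \<ge> 1"
  and B': "(m-1)*T + m*w*Q \<le> m*w*z"
  and C': "T - D + w*Q \<ge> 0"
  and E': "m*w \<le> w*(D+Q) + m*z"
  and A': "T + m*Q \<le> m*z"
shows "m \<le> z*(2*w+1)"
proof -
  have a: "m*(T-D+w*Q) \<ge> 0" using C' m by simp
  have a2: "m*(T-D+w*Q) = m*T - m*D + m*w*Q" "(m-1)*T = m*T - T" by (simp_all add: algebra_simps)
  have 2: "m*w*z + m*z \<ge> m*D + m*Q" using B' a a2 A' by argo
  have b: "w*(m*w*z + m*z) \<ge> w*(m*D + m*Q)" using 2 w by (simp add: mult_left_mono)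
  have c: "m*(m*w) \<le> m*(w*(D+Q) + m*z)" using E' m by (simp add: mult_left_mono)
  have d: "w*(m*w*z + m*z) = m*(w*w*z + w*z)" "w*(m*D + m*Q) = m*(w*(D+Q))" "m*(w*(D+Q) + m*z) = m*(w*(D+Q)) + m*(m*z)"
    by (simp_all add: algebra_simps)
  have 4: "m*(w*w*z + w*z) \<ge> m*(m*w - m*z)" using b c d by (simp add: algebra_simps)
  have 5: "w*w*z + w*z \<ge> m*w - m*z" using 4 m by (simp add: mult_le_cancel_left)
  have 6: "w*(z*(2*w+1)) \<ge> w*(w*w)" using 5 unfolding w(2)[symmetric] by (simp add: algebra_simps)
  have "z*(2*w+1) \<ge> w*w" using 6 w(1) by (simp add: mult_le_cancel_left)
  then show ?thesis using w by simp
qed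

lemma aff_core:
  fixes m :: nat and B P :: "nat \<Rightarrow> nat \<Rightarrow> real" and q :: "nat \<Rightarrow> real" and z :: real
  assumes m: "m \<ge> 1"
  and Bd: "\<And>i. i<m \<Longrightarrow> B i i = 1"
  and Bo: "\<And>i j. i<m \<Longrightarrow> j<m \<Longrightarrow> i\<noteq>j \<Longrightarrow> B i j \<le> 1 / sqrt (real m)"
  and feas: "\<forall>h\<in>U3 m. (\<forall>i<m. (\<Sum>j<m. B i j * aff_pol m P q h j) \<ge> h i) \<and> (\<forall>j<m. 0 \<le> aff_pol m P q h j)"
  and zb: "\<forall>h\<in>U3 m. (\<Sum>j<m. aff_pol m P q h j) \<le> z"
  shows "real m \<le> z * (2 * sqrt (real m) + 1)"
proof -
  define w where "w = sqrt (real m)"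
  have w0: "w > 0" using m by (simp add: w_def)
  have ww: "w * w = real m" by (simp add: w_def)
  define hE where "hE k = (\<lambda>i. if i < m then gens3 m (k+1) i else 0)" for k
  define hN where "hN k = (\<lambda>i. if i < m then gens3 m (m+k+1) i else 0)" for k
  have hEU: "k < m \<Longrightarrow> hE k \<in> U3 m" for k unfolding hE_def by (rule gen_in_U3) simp
  have hNU: "k < m \<Longrightarrow> hN k \<in> U3 m" for k unfolding hN_def by (rule gen_in_U3) simp
  define y where "y k j = P j k + q j" for k j
  define S where "S j = (\<Sum>l<m. P j l)" for j
  have yE: "aff_pol m P q (hE k) j = y k j" if "k < m" for k j
  proof -
    have "(\<Sum>i<m. P j i * hE k i) = (\<Sum>i<m. if i = k then P j i else 0)"
      using that by (intro sum.cong) (auto simp: hE_def gens3_def unit_vec_def)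
    also have "\<dots> = P j k" using that by (simp add: sum.delta')
    finally show ?thesis by (simp add: aff_pol_def y_def)
  qed
  have hEk: "hE k k = 1" if "k < m" for k using that by (simp add: hE_def gens3_def unit_vec_def)
  have yN: "aff_pol m P q (hN k) j = (S j - P j k) / w + q j" if "k < m" for k j
  proof -
    have "(\<Sum>i<m. P j i * hN k i) = (\<Sum>i<m. P j i / w - (if i = k then P j i / w else 0))"
      using that by (intro sum.cong) (auto simp: hN_def gens3_def unit_vec_def w_def diff_divide_distrib)
    also have "\<dots> = (\<Sum>i<m. P j i) / w - P j k / w" using that
      by (simp add: sum_subtractf sum.delta' sum_divide_distrib)
    finally show ?thesis by (simp add: aff_pol_def S_def diff_divide_distrib)
  qed
  have a: "(\<Sum>j<m. y k j) \<le> z" if "k < m" for k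
    using zb hEU[OF that] yE[OF that] by auto
  have b: "(\<Sum>j<m. (S j - P j k) / w + q j) \<le> z" if "k < m" for k
    using zb hNU[OF that] yN[OF that] by auto
  have c1: "0 \<le> y k j" if "k < m" "j < m" for k j
    using feas hEU[OF that(1)] yE[OF that(1)] that(2) by auto
  have c2: "0 \<le> (S k - P k k) / w + q k" if "k < m" for k
    using feas hNU[OF that] yN[OF that] that by auto
  have d: "1 \<le> (\<Sum>j<m. B k j * y k j)" if "k < m" for k
  proof -
    have "hE k k \<le> (\<Sum>j<m. B k j * aff_pol m P q (hE k) j)" using feas hEU[OF that] that by blast
    then show ?thesis using yE[OF that] hEk[OF that] by simp
  qed
  have d2: "(\<Sum>j<m. B k j * y k j) \<le> y k k + (\<Sum>j<m. y k j) / w" if "k < m" for k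
  proof -
    have "(\<Sum>j<m. B k j * y k j) \<le> (\<Sum>j<m. (if j = k then y k j else 0) + y k j / w)"
    proof (rule sum_mono)
      fix j assume j: "j \<in> {..<m}"
      show "B k j * y k j \<le> (if j = k then y k j else 0) + y k j / w"
      proof (cases "j = k")
        case True then show ?thesis using Bd[OF that] c1[OF that that] w0 by simp
      next
        case False
        have "B k j * y k j \<le> (1 / w) * y k j"
          using Bo[OF that _ ] j False c1[OF that, of j] by (intro mult_right_mono) (auto simp: w_def)
        then show ?thesis using False by simp
      qed
    qed
    also have "\<dots> = y k k + (\<Sum>j<m. y k j) / w" using that
      by (simp add: sum.distrib sum.delta' sum_divide_distrib)
    finally show ?thesis .
  qed
  have e: "1 \<le> y k k + z / w" if "k < m" for k
  proof -
    have "(\<Sum>j<m. y k j) / w \<le> z / w" using a[OF that] w0 by (simp add: divide_right_mono)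
    then show ?thesis using d[OF that] d2[OF that] by linarith
  qed
  define T where "T = (\<Sum>j<m. S j)"
  define D where "D = (\<Sum>i<m. P i i)"
  define Q where "Q = (\<Sum>j<m. q j)"
  have swap: "(\<Sum>k<m. \<Sum>j<m. P j k) = T"
    unfolding T_def S_def by (rule sum.swap)
  have A': "T + real m * Q \<le> real m * z"
  proof -
    have "(\<Sum>k<m. \<Sum>j<m. y k j) \<le> (\<Sum>k<m. z)" by (rule sum_mono) (use a in auto)
    moreover have "(\<Sum>k<m. \<Sum>j<m. y k j) = T + real m * Q"
      by (simp add: y_def sum.distrib swap Q_def)
    ultimately show ?thesis by simp
  qed
  have B0: "(\<Sum>k<m. \<Sum>j<m. (S j - P j k) / w + q j) \<le> real m * z"
  proof -
    have "(\<Sum>k<m. \<Sum>j<m. (S j - P j k) / w + q j) \<le> (\<Sum>k<m. z)" by (rule sum_mono) (use b in auto)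
    then show ?thesis by simp
  qed
  have B1: "(\<Sum>k<m. \<Sum>j<m. (S j - P j k) / w + q j) = (real m * T - T) / w + real m * Q"
  proof -
    have "(\<Sum>k<m. \<Sum>j<m. (S j - P j k) / w + q j) = (\<Sum>k<m. (T - (\<Sum>j<m. P j k)) / w + Q)"
      by (simp add: sum.distrib sum_subtractf sum_divide_distrib[symmetric] T_def Q_def)
    also have "\<dots> = (real m * T - T) / w + real m * Q"
      by (simp add: sum.distrib sum_subtractf sum_divide_distrib[symmetric] swap)
    finally show ?thesis .
  qed
  have B': "(real m - 1) * T + real m * w * Q \<le> real m * w * z"
  proof -
    have "(real m * T - T) / w + real m * Q \<le> real m * z" using B0 B1 by simp
    then have "w * ((real m * T - T) / w + real m * Q) \<le> w * (real m * z)" using w0 by (simp add: mult_left_mono)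
    moreover have "w * ((real m * T - T) / w + real m * Q) = (real m - 1) * T + real m * w * Q"
      using w0 by (simp add: field_simps)
    ultimately show ?thesis by (simp add: algebra_simps)
  qed
  have C': "T - D + w * Q \<ge> 0"
  proof -
    have "0 \<le> (\<Sum>k<m. (S k - P k k) / w + q k)" by (rule sum_nonneg) (use c2 in auto)
    also have "\<dots> = (T - D) / w + Q" by (simp add: sum.distrib sum_subtractf sum_divide_distrib[symmetric] T_def D_def Q_def)
    finally have "0 \<le> w * ((T - D) / w + Q)" using w0 by simp
    moreover have "w * ((T - D) / w + Q) = T - D + w * Q" using w0 by (simp add: field_simps)
    ultimately show ?thesis by simp
  qed
  have E': "real m * w \<le> w * (D + Q) + real m * z"
  proof -
    have "(\<Sum>k<m. (1::real)) \<le> (\<Sum>k<m. y k k + z / w)" by (rule sum_mono) (use e in auto)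
    also have "\<dots> = D + Q + real m * z / w" by (simp add: sum.distrib y_def D_def Q_def)
    finally have "real m \<le> D + Q + real m * z / w" by simp
    then have "w * real m \<le> w * (D + Q + real m * z / w)" using w0 by (simp add: mult_left_mono)
    moreover have "w * (D + Q + real m * z / w) = w * (D + Q) + real m * z" using w0 by (simp add: field_simps)
    ultimately show ?thesis by (simp add: algebra_simps)
  qed
  have "real m \<le> z * (2 * w + 1)"
    by (rule final_arith[OF w0 ww _ B' C' E' A']) (use m in simp)
  then show ?thesis by (simp add: w_def)
qed

lemma aff_lower:
  fixes m :: nat and B :: "nat \<Rightarrow> nat \<Rightarrow> real"
  assumes m: "m \<ge> 1"
  and Bd: "\<And>i. i<m \<Longrightarrow> B i i = 1"
  and Bo: "\<And>i j. i<m \<Longrightarrow> j<m \<Longrightarrow> i\<noteq>j \<Longrightarrow> B i j \<le> 1 / sqrt (real m)"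
  shows "ereal (real m / (2 * sqrt (real m) + 1)) \<le> z_Aff m m (\<lambda>_ _. 0) B (\<lambda>_. 0) (\<lambda>_. 1) (U3 m)"
  unfolding z_Aff_def
proof (rule INF_greatest, clarify)
  fix x P q
  assume feas0: "\<forall>j<m. 0 \<le> x j"
    "\<forall>h\<in>U3 m. (\<forall>i<m. h i \<le> (\<Sum>j<m. 0 * x j) + (\<Sum>j<m. B i j * aff_pol m P q h j)) \<and> (\<forall>j<m. 0 \<le> aff_pol m P q h j)"
  have feas: "\<forall>h\<in>U3 m. (\<forall>i<m. (\<Sum>j<m. B i j * aff_pol m P q h j) \<ge> h i) \<and> (\<forall>j<m. 0 \<le> aff_pol m P q h j)"
    using feas0(2) by simp
  define Z where "Z = (SUP h\<in>U3 m. ereal (\<Sum>j<m. 1 * aff_pol m P q h j))"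
  have up: "h \<in> U3 m \<Longrightarrow> ereal (\<Sum>j<m. aff_pol m P q h j) \<le> Z" for h
    unfolding Z_def using SUP_upper[of h "U3 m" "\<lambda>h. ereal (\<Sum>j<m. 1 * aff_pol m P q h j)"] by simp
  have "(\<lambda>i. if i < m then gens3 m 0 i else 0) \<in> U3 m" by (rule gen_in_U3) simp
  then have nm: "Z \<noteq> -\<infinity>" using up by force
  have "ereal (real m / (2 * sqrt (real m) + 1)) \<le> Z"
  proof (cases Z)
    case (real z)
    have zb: "\<forall>h\<in>U3 m. (\<Sum>j<m. aff_pol m P q h j) \<le> z" using up real by auto
    have "real m \<le> z * (2 * sqrt (real m) + 1)" by (rule aff_core[OF m Bd Bo feas zb])
    then have "real m / (2 * sqrt (real m) + 1) \<le> z"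
    proof -
      have "0 < 2 * sqrt (real m) + 1" by (simp add: add_nonneg_pos)
      then show ?thesis using \<open>real m \<le> z * (2 * sqrt (real m) + 1)\<close> by (simp add: divide_le_eq)
    qed
    then show ?thesis using real by simp
  qed (use nm in auto)
  then show "ereal (real m / (2 * sqrt (real m) + 1)) \<le> ereal (\<Sum>j<m. 0 * x j) + Z" by simp
qed

lemma ar_upper:
  fixes m :: nat and B :: "nat \<Rightarrow> nat \<Rightarrow> real"
  assumes m: "m \<ge> 2"
  and Bd: "\<And>i. i<m \<Longrightarrow> B i i = 1"
  and Bnn: "\<And>i j. i<m \<Longrightarrow> j<m \<Longrightarrow> 0 \<le> B i j"
  and row: "\<And>i. i<m \<Longrightarrow> (real m - 1) / (4 * sqrt (real m)) \<le> (\<Sum>j<m. B i j)"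
  shows "z_AR m m (\<lambda>_ _. 0) B (\<lambda>_. 0) (\<lambda>_. 1) (U3 m) \<le> 8"
proof -
  define s where "s = sqrt (real m)"
  have s0: "s > 0" using m by (simp add: s_def)
  define \<sigma> where "\<sigma> = 4 / (real m - 1)"
  have m1: "real m - 1 > 0" using m by simp
  have sig0: "\<sigma> \<ge> 0" using m1 by (simp add: \<sigma>_def)
  have sigm: "\<sigma> * ((real m - 1) / (4 * s)) = 1 / s" using m1 s0 by (simp add: \<sigma>_def field_simps)
  have msig: "real m * \<sigma> \<le> 8" using m1 m by (simp add: \<sigma>_def field_simps)
  have inner: "(INF y\<in>{y. (\<forall>j<m. 0 \<le> y j) \<and> (\<forall>i<m. h i \<le> (\<Sum>j<m. B i j * y j))}.
             ereal (\<Sum>j<m. y j)) \<le> ereal 8" if hU: "h \<in> U3 m" for h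
  proof -
    obtain w where w0: "\<forall>k\<le>2*m. 0 \<le> w k" and w1: "(\<Sum>k\<le>2*m. w k) = 1"
      and hw: "\<forall>i<m. h i = (\<Sum>k\<le>2*m. w k * gens3 m k i)"
      using hU unfolding U3_def conv_pts_def by blast
    define W where "W = (\<Sum>l<m. w (m+l+1))"
    define y where "y j = w (j+1) + \<sigma> * W" for j
    have wl: "0 \<le> w (l+1)" if "l < m" for l using w0 that by auto
    have wn: "0 \<le> w (m+l+1)" if "l < m" for l using w0 that by auto
    have W0: "0 \<le> W" unfolding W_def by (rule sum_nonneg) (use wn in auto)
    have y0: "0 \<le> y j" if "j < m" for j using wl[OF that] sig0 W0 by (simp add: y_def)
    have hb: "h i \<le> w (i+1) + W / s" if i: "i < m" for i
    proof -
      have "h i = w 0 * gens3 m 0 i + (\<Sum>l<m. w (l+1) * gens3 m (l+1) i) + (\<Sum>l<m. w (m+l+1) * gens3 m (m+l+1) i)"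
        using hw i sum_split3[of "\<lambda>k. w k * gens3 m k i" m] by simp
      also have "(\<Sum>l<m. w (l+1) * gens3 m (l+1) i) = (\<Sum>l<m. if l = i then w (l+1) else 0)"
        by (intro sum.cong) (auto simp: gens3_def unit_vec_def)
      also have "\<dots> = w (i+1)" using i by (simp add: sum.delta)
      also have "(\<Sum>l<m. w (m+l+1) * gens3 m (m+l+1) i) \<le> (\<Sum>l<m. w (m+l+1) / s)"
      proof (rule sum_mono)
        fix l assume l: "l \<in> {..<m}"
        have "gens3 m (m+l+1) i = (1 - unit_vec l i) / s" by (simp add: gens3_def s_def)
        moreover have "(1 - unit_vec l i) / s \<le> 1 / s" using s0 by (simp add: unit_vec_def divide_right_mono)
        moreover have "0 \<le> (1 - unit_vec l i) / s" using s0 by (simp add: unit_vec_def)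
        ultimately show "w (m+l+1) * gens3 m (m+l+1) i \<le> w (m+l+1) / s"
          using wn[of l] l mult_left_mono[of "(1 - unit_vec l i) / s" "1/s" "w (m+l+1)"] by simp
      qed
      also have "(\<Sum>l<m. w (m+l+1) / s) = W / s" by (simp add: W_def sum_divide_distrib)
      finally show ?thesis by (simp add: gens3_def)
    qed
    have cov: "(\<Sum>j<m. B i j * y j) \<ge> h i" if i: "i < m" for i
    proof -
      have "(\<Sum>j<m. B i j * y j) = (\<Sum>j<m. B i j * w (j+1)) + \<sigma> * W * (\<Sum>j<m. B i j)"
        by (simp add: y_def distrib_left sum.distrib sum_distrib_left mult.commute mult.left_commute)
      moreover have "B i i * w (i+1) \<le> (\<Sum>j<m. B i j * w (j+1))"
        using i wl by (intro member_le_sum) (auto intro!: mult_nonneg_nonneg Bnn)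
      moreover have "\<sigma> * W * ((real m - 1) / (4 * s)) \<le> \<sigma> * W * (\<Sum>j<m. B i j)"
        using row[OF i] sig0 W0 unfolding s_def by (intro mult_left_mono) auto
      moreover have "\<sigma> * W * ((real m - 1) / (4 * s)) = W / s" 
      proof -
        have "\<sigma> * W * ((real m - 1) / (4 * s)) = W * (\<sigma> * ((real m - 1) / (4 * s)))" by simp
        also have "\<dots> = W / s" using sigm by simp
        finally show ?thesis .
      qed
      ultimately show ?thesis using hb[OF i] Bd[OF i] by simp
    qed
    have yin: "y \<in> {y. (\<forall>j<m. 0 \<le> y j) \<and> (\<forall>i<m. h i \<le> (\<Sum>j<m. B i j * y j))}"
      using y0 cov by simp
    have cost: "(\<Sum>j<m. 1 * y j) \<le> 8"
    proof -
      have "(\<Sum>j<m. 1 * y j) = (\<Sum>j<m. w (j+1)) + real m * \<sigma> * W" by (simp add: y_def sum.distrib)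
      moreover have "w 0 + (\<Sum>j<m. w (j+1)) + W = 1" using w1 sum_split3[of w m] by (simp add: W_def)
      moreover have "0 \<le> w 0" using w0 by simp
      moreover have "real m * \<sigma> * W \<le> 8 * W" using msig W0 by (simp add: mult_right_mono)
      moreover have "0 \<le> (\<Sum>j<m. w (j+1))" by (rule sum_nonneg) (use wl in auto)
      ultimately show ?thesis by linarith
    qed
    show ?thesis by (rule INF_lower2[OF yin]) (use cost in simp)
  qed
  have x0: "(\<lambda>_. 0::real) \<in> {x. \<forall>j<m. 0 \<le> x j}" by simp
  show ?thesis unfolding z_AR_def
    using inner by (auto intro!: INF_lower2[OF x0] SUP_least)
qed



definition rowset :: "nat \<Rightarrow> nat \<Rightarrow> (nat \<times> nat) set" where
  "rowset m i = {p \<in> offdiag m. fst p = i}"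

abbreviation "M0 \<equiv> uniform_measure lborel {0..1::real}"

lemma M0_prob: "prob_space M0"
  by (intro prob_space_uniform_measure) auto

lemma finite_offdiag: "finite (offdiag m)"
  by (rule finite_subset[of _ "{..<m} \<times> {..<m}"]) (auto simp: offdiag_def)

lemma U_prob: "prob_space (U_space m)"
  unfolding U_space_def by (intro prob_space_PiM M0_prob)

lemma sets_U: "sets (U_space m) = sets (PiM (offdiag m) (\<lambda>_. borel))"
  unfolding U_space_def by (intro sets_PiM_cong) auto

lemma space_U: "space (U_space m) = PiE (offdiag m) (\<lambda>_. UNIV)"
  unfolding U_space_def by (simp add: space_PiM)

lemma meas_comp: "p \<in> offdiag m \<Longrightarrow> (\<lambda>x. x p) \<in> borel_measurable (U_space m)"
  unfolding measurable_cong_sets[OF sets_U refl] by (rule measurable_component_singleton)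

lemma AE_bounds: "p \<in> offdiag m \<Longrightarrow> AE x in U_space m. x p \<in> {0..1}"
  unfolding U_space_def
  by (intro AE_PiM_component M0_prob AE_uniform_measureI) auto

lemma M0_expect: "prob_space.expectation M0 (\<lambda>x. x) = 1/2"
proof -
  interpret P: prob_space M0 by (rule M0_prob)
  have "distributed M0 lborel (\<lambda>x. x) (\<lambda>x. indicator {0..1} x / measure lborel {0..1::real})"
  proof (rule P.uniform_distrI_borel_atLeastAtMost)
    show "(\<lambda>x. x) \<in> borel_measurable M0" by (simp add: measurable_cong_sets[OF sets_uniform_measure refl])
    fix t :: real assume t: "0 \<le> t" "t \<le> 1"
    have "{x \<in> space M0. x \<le> t} = {..t}" by auto
    then show "P.prob {x \<in> space M0. x \<le> t} = (t - 0) / (1 - 0)"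
      using t by simp
  qed simp
  from P.uniform_distributed_expectation[OF this] show ?thesis by simp
qed

lemma U_expect: "p \<in> offdiag m \<Longrightarrow> prob_space.expectation (U_space m) (\<lambda>x. x p) = 1/2"
proof -
  assume p: "p \<in> offdiag m"
  have d: "distr (U_space m) M0 (\<lambda>x. x p) = M0"
    unfolding U_space_def by (intro distr_PiM_component M0_prob p)
  have "prob_space.expectation (U_space m) (\<lambda>x. x p) = integral\<^sup>L (distr (U_space m) M0 (\<lambda>x. x p)) (\<lambda>x. x)"
    by (subst integral_distr) (auto simp: U_space_def intro: measurable_component_singleton p
          simp: measurable_cong_sets[OF sets_uniform_measure refl])
  also have "\<dots> = 1/2" using d M0_expect by simp
  finally show ?thesis .
qed

lemma U_indep:
  assumes ne: "offdiag m \<noteq> {}"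
  shows "prob_space.indep_vars (U_space m) (\<lambda>_. borel) (\<lambda>p x. x p) (offdiag m)"
proof -
  interpret prob_space "U_space m" by (rule U_prob)
  have "distr (U_space m) (PiM (offdiag m) (\<lambda>_. borel)) (\<lambda>x. \<lambda>i\<in>offdiag m. x i)
        = PiM (offdiag m) (\<lambda>i. distr (U_space m) borel (\<lambda>x. x i))"
  proof -
    have "distr (U_space m) (PiM (offdiag m) (\<lambda>_. borel)) (\<lambda>x. \<lambda>i\<in>offdiag m. x i)
        = distr (U_space m) (U_space m) (\<lambda>x. x)"
      by (intro distr_cong) (auto simp: sets_U space_U PiE_def extensional_def restrict_def fun_eq_iff)
    also have "\<dots> = U_space m" by (rule distr_id)
    also have "\<dots> = PiM (offdiag m) (\<lambda>i. distr (U_space m) borel (\<lambda>x. x i))"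
    proof -
      have "distr (U_space m) borel (\<lambda>x. x i) = M0" if "i \<in> offdiag m" for i
      proof -
        have "distr (U_space m) borel (\<lambda>x. x i) = distr (U_space m) M0 (\<lambda>x. x i)"
          by (intro distr_cong) auto
        also have "\<dots> = M0" unfolding U_space_def by (intro distr_PiM_component M0_prob that)
        finally show ?thesis .
      qed
      then show ?thesis unfolding U_space_def by (intro PiM_cong) auto
    qed
    finally show ?thesis .
  qed
  then show ?thesis
    by (subst indep_vars_iff_distr_eq_PiM'[OF ne]) (auto intro: meas_comp)
qed

lemma rowset_sub: "rowset m i \<subseteq> offdiag m" by (auto simp: rowset_def)

lemma card_rowset: "i < m \<Longrightarrow> card (rowset m i) = m - 1"
proof -
  assume i: "i < m"
  have "rowset m i = (\<lambda>l. (i,l)) ` ({..<m} - {i})" using i by (auto simp: rowset_def offdiag_def)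
  moreover have "inj_on (\<lambda>l. (i,l)) ({..<m} - {i})" by (auto simp: inj_on_def)
  ultimately have "card (rowset m i) = card ({..<m} - {i})" by (simp add: card_image)
  then show ?thesis using i by simp
qed

lemma row_bound:
  assumes m: "m \<ge> 2" and i: "i < m"
  shows "measure (U_space m) {x \<in> space (U_space m). (\<Sum>p\<in>rowset m i. x p) \<le> (real m - 1)/2 - (real m - 1)/4}
          \<le> exp (- (real m - 1) / 8)"
proof -
  have ne: "offdiag m \<noteq> {}" 
  proof -
    have "(0,1) \<in> offdiag m" using m by (simp add: offdiag_def)
    then show ?thesis by auto
  qed
  have fin: "finite (rowset m i)" using finite_offdiag rowset_sub by (rule finite_subset[rotated])
  have cr: "real (card (rowset m i)) = real m - 1" using card_rowset[OF i] m by simp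
  interpret prob_space "U_space m" by (rule U_prob)
  interpret H: Hoeffding_ineq "U_space m" "rowset m i" "\<lambda>p x. x p" "\<lambda>_. 0" "\<lambda>_. 1" "(real m - 1)/2"
  proof unfold_locales
    show "finite (rowset m i)" by (rule fin)
    show "indep_vars (\<lambda>_. borel) (\<lambda>p x. x p) (rowset m i)"
      by (rule indep_vars_subset[OF U_indep[OF ne] rowset_sub])
    fix p assume "p \<in> rowset m i"
    then show "AE x in U_space m. x p \<in> {0..1}" using rowset_sub by (intro AE_bounds) auto
  next
    have "(\<Sum>p\<in>rowset m i. expectation (\<lambda>x. x p)) = (\<Sum>p\<in>rowset m i. 1/2)"
      using rowset_sub by (intro sum.cong refl U_expect) auto
    then have "(real m - 1) / 2 = (\<Sum>p\<in>rowset m i. expectation (\<lambda>x. x p))" using cr by simp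
    then show "(real m - 1) / 2 \<equiv> (\<Sum>p\<in>rowset m i. expectation (\<lambda>x. x p))" by (rule eq_reflection)
  qed
  have "prob {x \<in> space (U_space m). (\<Sum>p\<in>rowset m i. x p) \<le> (real m - 1)/2 - (real m - 1)/4}
        \<le> exp (-2 * ((real m - 1)/4)\<^sup>2 / (\<Sum>p\<in>rowset m i. (1 - 0)\<^sup>2))"
    by (rule H.Hoeffding_ineq_le) (use m cr in auto)
  also have "(-2 * ((real m - 1)/4)\<^sup>2 / (\<Sum>p\<in>rowset m i. (1 - 0)\<^sup>2)) = - (real m - 1) / 8"
  proof -
    have e: "(\<Sum>p\<in>rowset m i. (1 - 0::real)\<^sup>2) = real m - 1" using cr by simp
    have g: "c > 0 \<Longrightarrow> -2 * (c/4)\<^sup>2 / c = - c / 8" for c :: real by (simp add: power2_eq_square field_simps)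
    have "real m - 1 > 0" using m by simp
    then show ?thesis unfolding e by (rule g)
  qed
  finally show ?thesis .
qed
lemma num_bound:
  fixes m :: real assumes m: "m \<ge> 13824"
  shows "m * exp (- (m - 1) / 8) \<le> 1 / m"
proof -
  have e3: "exp ((m - 1) / 8) = exp ((m - 1) / 24) ^ 3"
    by (simp add: exp_of_nat_mult[symmetric])
  have "m / 24 \<le> 1 + (m - 1) / 24" by (simp add: field_simps)
  also have "\<dots> \<le> exp ((m - 1) / 24)" by (rule exp_ge_add_one_self)
  finally have a: "(m / 24) ^ 3 \<le> exp ((m - 1) / 24) ^ 3" using m by (intro power_mono) auto
  have b: "m * m \<le> (m / 24) ^ 3"
  proof -
    have "m * m * 13824 \<le> m * m * m" using m by (intro mult_left_mono) auto
    then show ?thesis by (simp add: power3_eq_cube)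
  qed
  have c: "m * m \<le> exp ((m - 1) / 8)" using a b e3 by simp
  have "m * exp (- (m - 1) / 8) * m = m * m / exp ((m - 1) / 8)"
  proof -
    have "- (m - 1) / 8 = - ((m - 1) / 8)" by (rule minus_divide_left[symmetric])
    then have "exp (- (m - 1) / 8) = 1 / exp ((m - 1) / 8)" by (simp only: exp_minus inverse_eq_divide)
    then show ?thesis by simp
  qed
  also have "\<dots> \<le> 1" using c by simp
  finally show ?thesis using m by (simp add: field_simps)
qed

lemma prob_part:
  assumes m: "m \<ge> 13824"
  shows "\<exists>E\<in>sets (U_space m). 1 - 1 / real m \<le> measure (U_space m) E \<and>
     (\<forall>u\<in>E. (\<forall>p\<in>offdiag m. 0 \<le> u p \<and> u p \<le> 1) \<and> (\<forall>i<m. (real m - 1)/4 \<le> (\<Sum>p\<in>rowset m i. u p)))"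
proof -
  interpret prob_space "U_space m" by (rule U_prob)
  let ?S = "space (U_space m)"
  have m2: "m \<ge> 2" using m by simp
  define g where "g i (x :: nat \<times> nat \<Rightarrow> real) = (\<Sum>p\<in>rowset m i. x p)" for i x
  have gm[measurable]: "g i \<in> borel_measurable (U_space m)" for i
    unfolding g_def using rowset_sub by (intro borel_measurable_sum meas_comp) auto
  define N where "N p = {x \<in> ?S. \<not> (x p \<in> {0..1::real})}" for p
  define Bd where "Bd i = {x \<in> ?S. g i x < (real m - 1)/4}" for i
  have Nm: "N p \<in> sets (U_space m)" if "p \<in> offdiag m" for p
  proof -
    have [measurable]: "(\<lambda>x. x p) \<in> borel_measurable (U_space m)" by (rule meas_comp[OF that])
    show ?thesis unfolding N_def by measurable
  qed
  have Bm: "Bd i \<in> sets (U_space m)" for i unfolding Bd_def by measurable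
  have N0: "prob (N p) = 0" if "p \<in> offdiag m" for p
  proof -
    have "AE x in U_space m. x p \<in> {0..1}" by (rule AE_bounds[OF that])
    then have "N p \<in> null_sets (U_space m)"
      using AE_iff_null[of "U_space m" "\<lambda>x. x p \<in> {0..1}"] Nm[OF that] unfolding N_def by blast
    then show ?thesis by (simp add: measure_eq_0_null_sets)
  qed
  define F where "F = (\<Union>p\<in>offdiag m. N p) \<union> (\<Union>i\<in>{..<m}. Bd i)"
  have Fm: "F \<in> sets (U_space m)" unfolding F_def using Nm Bm finite_offdiag by auto
  have pN: "prob (\<Union>p\<in>offdiag m. N p) \<le> 0"
  proof -
    have "prob (\<Union>p\<in>offdiag m. N p) \<le> (\<Sum>p\<in>offdiag m. prob (N p))"
      by (rule measure_UNION_le) (use finite_offdiag Nm in auto)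
    also have "\<dots> = 0" using N0 by simp
    finally show ?thesis .
  qed
  have pB: "prob (\<Union>i\<in>{..<m}. Bd i) \<le> real m * exp (- (real m - 1) / 8)"
  proof -
    have "prob (\<Union>i\<in>{..<m}. Bd i) \<le> (\<Sum>i<m. prob (Bd i))"
      by (rule measure_UNION_le) (use Bm in auto)
    also have "\<dots> \<le> (\<Sum>i<m. exp (- (real m - 1) / 8))"
    proof (rule sum_mono)
      fix i assume i: "i \<in> {..<m}"
      have "prob (Bd i) \<le> prob {x \<in> ?S. (\<Sum>p\<in>rowset m i. x p) \<le> (real m - 1)/2 - (real m - 1)/4}"
      proof (rule finite_measure_mono)
        show "Bd i \<subseteq> {x \<in> ?S. (\<Sum>p\<in>rowset m i. x p) \<le> (real m - 1)/2 - (real m - 1)/4}"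
          by (auto simp: Bd_def g_def)
        have gi: "g i = (\<lambda>x. sum x (rowset m i))" by (simp add: g_def fun_eq_iff)
        have [measurable]: "(\<lambda>x. sum x (rowset m i)) \<in> borel_measurable (U_space m)"
          using gm[of i] unfolding gi .
        show "{x \<in> ?S. (\<Sum>p\<in>rowset m i. x p) \<le> (real m - 1)/2 - (real m - 1)/4} \<in> sets (U_space m)"
          by measurable
      qed
      also have "\<dots> \<le> exp (- (real m - 1) / 8)" using row_bound[OF m2] i by simp
      finally show "prob (Bd i) \<le> exp (- (real m - 1) / 8)" .
    qed
    also have "\<dots> = real m * exp (- (real m - 1) / 8)" by simp
    finally show ?thesis .
  qed
  have pF: "prob F \<le> 1 / real m"
  proof -
    have "prob F \<le> prob (\<Union>p\<in>offdiag m. N p) + prob (\<Union>i\<in>{..<m}. Bd i)"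
      unfolding F_def by (rule measure_Un_le) (use Nm Bm finite_offdiag in auto)
    also have "\<dots> \<le> real m * exp (- (real m - 1) / 8)" using pN pB by simp
    also have "\<dots> \<le> 1 / real m" by (rule num_bound) (use m in simp)
    finally show ?thesis .
  qed
  define E where "E = ?S - F"
  have Em: "E \<in> sets (U_space m)" unfolding E_def using Fm by auto
  have "prob E = 1 - prob F" unfolding E_def by (rule prob_compl[OF Fm])
  then have pE: "1 - 1 / real m \<le> prob E" using pF by simp
  have "\<forall>u\<in>E. (\<forall>p\<in>offdiag m. 0 \<le> u p \<and> u p \<le> 1) \<and> (\<forall>i<m. (real m - 1)/4 \<le> (\<Sum>p\<in>rowset m i. u p))"
    unfolding E_def F_def N_def Bd_def g_def by (auto simp: not_less)
  then show ?thesis using Em pE by blast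
qed


lemma row_lemma:
  assumes i: "i < m" and uE: "\<forall>p\<in>offdiag m. 0 \<le> u p \<and> u p \<le> 1"
  shows "(\<Sum>p\<in>rowset m i. u p) / sqrt (real m) \<le> (\<Sum>j<m. B_tilde m u i j)"
proof -
  have rs: "rowset m i = (\<lambda>l. (i,l)) ` ({..<m} - {i})" using i by (auto simp: rowset_def offdiag_def)
  have inj: "inj_on (\<lambda>l. (i,l)) ({..<m} - {i})" by (auto simp: inj_on_def)
  have "(\<Sum>p\<in>rowset m i. u p) / sqrt (real m) = (\<Sum>l\<in>{..<m} - {i}. u (i,l) / sqrt (real m))"
    unfolding rs by (simp add: sum.reindex[OF inj] sum_divide_distrib)
  also have "\<dots> = (\<Sum>l\<in>{..<m} - {i}. B_tilde m u i l)" by (intro sum.cong) (auto simp: B_tilde_def)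
  also have "\<dots> \<le> (\<Sum>j<m. B_tilde m u i j)"
  proof (rule sum_mono2)
    show "\<And>b. b \<in> {..<m} - ({..<m} - {i}) \<Longrightarrow> 0 \<le> B_tilde m u i b" by (auto simp: B_tilde_def)
  qed auto
  finally show ?thesis .
qed

theorem theorem3:
  "\<exists>C::real. C > 0 \<and> (\<exists>m0::nat. \<forall>m::nat. m \<ge> 1 \<and> m \<ge> m0 \<longrightarrow>
     (\<exists>E \<in> sets (U_space m). measure (U_space m) E \<ge> 1 - 1 / real m \<and>
        (\<forall>u \<in> E.
           z_Aff m m (\<lambda>_ _. 0) (B_tilde m u) (\<lambda>_. 0) (\<lambda>_. 1) (U3 m)
             \<ge> ereal (C * sqrt (real m)) *
               z_AR m m (\<lambda>_ _. 0) (B_tilde m u) (\<lambda>_. 0) (\<lambda>_. 1) (U3 m))))"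
proof (intro exI[of _ "1/24"] conjI exI[of _ "13824::nat"] allI impI)
  show "(0::real) < 1/24" by simp
  fix m :: nat assume "1 \<le> m \<and> 13824 \<le> m"
  then have m: "m \<ge> 13824" by simp
  obtain E where Em: "E \<in> sets (U_space m)" and pE: "1 - 1 / real m \<le> measure (U_space m) E"
    and uE: "\<And>u. u \<in> E \<Longrightarrow> (\<forall>p\<in>offdiag m. 0 \<le> u p \<and> u p \<le> 1) \<and> (\<forall>i<m. (real m - 1)/4 \<le> (\<Sum>p\<in>rowset m i. u p))"
    using prob_part[OF m] by blast
  show "\<exists>E \<in> sets (U_space m). measure (U_space m) E \<ge> 1 - 1 / real m \<and>
        (\<forall>u \<in> E.
           z_Aff m m (\<lambda>_ _. 0) (B_tilde m u) (\<lambda>_. 0) (\<lambda>_. 1) (U3 m)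
             \<ge> ereal (1/24 * sqrt (real m)) *
               z_AR m m (\<lambda>_ _. 0) (B_tilde m u) (\<lambda>_. 0) (\<lambda>_. 1) (U3 m))"
  proof (intro bexI[OF _ Em] conjI pE ballI)
    fix u assume u: "u \<in> E"
    have ub: "\<forall>p\<in>offdiag m. 0 \<le> u p \<and> u p \<le> 1" using uE[OF u] by blast
    have ur: "\<And>i. i < m \<Longrightarrow> (real m - 1)/4 \<le> (\<Sum>p\<in>rowset m i. u p)" using uE[OF u] by blast
    let ?B = "B_tilde m u"
    have s0: "sqrt (real m) > 0" using m by simp
    have Bd: "\<And>i. i < m \<Longrightarrow> ?B i i = 1" by (simp add: B_tilde_def)
    have Bo: "\<And>i j. i<m \<Longrightarrow> j<m \<Longrightarrow> i\<noteq>j \<Longrightarrow> ?B i j \<le> 1 / sqrt (real m)"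
    proof -
      fix i j assume "i<m" "j<m" "i\<noteq>j"
      then have "u (i,j) \<le> 1" using ub by (auto simp: offdiag_def)
      then show "?B i j \<le> 1 / sqrt (real m)" using \<open>i\<noteq>j\<close> s0 by (simp add: B_tilde_def divide_right_mono)
    qed
    have Bnn: "\<And>i j. i<m \<Longrightarrow> j<m \<Longrightarrow> 0 \<le> ?B i j"
    proof -
      fix i j assume "i<m" "j<m"
      then show "0 \<le> ?B i j" using ub by (cases "i = j") (auto simp: offdiag_def B_tilde_def)
    qed
    have row: "\<And>i. i<m \<Longrightarrow> (real m - 1) / (4 * sqrt (real m)) \<le> (\<Sum>j<m. ?B i j)"
    proof -
      fix i assume i: "i < m"
      have "(real m - 1) / (4 * sqrt (real m)) = ((real m - 1) / 4) / sqrt (real m)" by simp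
      also have "\<dots> \<le> (\<Sum>p\<in>rowset m i. u p) / sqrt (real m)"
        using s0 by (intro divide_right_mono[OF ur[OF i]]) simp
      also have "\<dots> \<le> (\<Sum>j<m. ?B i j)" by (rule row_lemma[OF i ub])
      finally show "(real m - 1) / (4 * sqrt (real m)) \<le> (\<Sum>j<m. ?B i j)" .
    qed
    have m1: "m \<ge> 1" and m2: "m \<ge> 2" using m by auto
    have low: "ereal (real m / (2 * sqrt (real m) + 1)) \<le> z_Aff m m (\<lambda>_ _. 0) ?B (\<lambda>_. 0) (\<lambda>_. 1) (U3 m)"
      by (rule aff_lower[OF m1 Bd Bo])
    have upp: "z_AR m m (\<lambda>_ _. 0) ?B (\<lambda>_. 0) (\<lambda>_. 1) (U3 m) \<le> 8"
      by (rule ar_upper[OF m2 Bd Bnn row])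
    have "ereal (1/24 * sqrt (real m)) * z_AR m m (\<lambda>_ _. 0) ?B (\<lambda>_. 0) (\<lambda>_. 1) (U3 m)
          \<le> ereal (1/24 * sqrt (real m)) * 8"
      by (rule ereal_mult_left_mono[OF upp]) simp
    also have "\<dots> = ereal (sqrt (real m) / 3)" by simp
    also have "\<dots> \<le> ereal (real m / (2 * sqrt (real m) + 1))"
    proof -
      have sq: "sqrt (real m) * sqrt (real m) = real m" by simp
      have "sqrt (real m) \<le> real m" using m by (simp add: real_sqrt_le_iff' power2_eq_square)
      moreover have "sqrt (real m) * (2 * sqrt (real m) + 1) = 2 * (sqrt (real m) * sqrt (real m)) + sqrt (real m)"
        by (simp add: algebra_simps)
      ultimately have "sqrt (real m) * (2 * sqrt (real m) + 1) \<le> 3 * real m" using sq by linarith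
      moreover have "0 < 2 * sqrt (real m) + 1" by (simp add: add_nonneg_pos)
      ultimately show ?thesis by (simp add: field_simps)
    qed
    also have "\<dots> \<le> z_Aff m m (\<lambda>_ _. 0) ?B (\<lambda>_. 0) (\<lambda>_. 1) (U3 m)" by (rule low)
    finally show "ereal (1/24 * sqrt (real m)) * z_AR m m (\<lambda>_ _. 0) ?B (\<lambda>_. 0) (\<lambda>_. 1) (U3 m)
          \<le> z_Aff m m (\<lambda>_ _. 0) ?B (\<lambda>_. 0) (\<lambda>_. 1) (U3 m)" .
  qed
qed

end
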